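(* Let $p=2m\ge 4$ be even, let $\Delta$ be the distance squared matrix of the cycle $C_p$, and let $\lambda$ be the largest eigenvalue of $\Delta$. Let $B$ be the $p\times p$ circulant matrix with entries $B_{ij}=2\lambda$ if $d_{ij}=m$ (i.e. $j$ is antipodal to $i$ on the cycle), $B_{ij}=-\lambda$ if $d_{ij}=m-1$, and $B_{ij}=0$ otherwise; equivalently its first row is $(\mathbf 0^T,-\lambda,2\lambda,-\lambda,\mathbf 0^T)$ with zero blocks of sizes $m-1$ and $m-2$. Then $\Delta$ is invertible and \[ \Delta^{-1}=\frac{1}{4\lambda m}\left(2J+B\right), \] where $J$ is the $p\times p$ all-ones matrix.
   Context: For a connected graph with vertices $1,\dots,n$, the distance squared matrix is the matrix with $(i,j)$ entry $d_{ij}^2$, where $d_{ij}$ is the graph distance between $i$ and $j$. The vertices of $C_p$ are labeled $1,\dots,p$ in cyclic order. *)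

theory Defs
  imports "Jordan_Normal_Form.Matrix" "Jordan_Normal_Form.Char_Poly"
begin

text \<open>Graph distance in the cycle C_p, vertices indexed 0..p-1 in cyclic order
  (vertex k+1 of the paper is index k).\<close>
definition cycle_dist :: "nat \<Rightarrow> nat \<Rightarrow> nat \<Rightarrow> nat" where
  "cycle_dist p i j = min (if i \<le> j then j - i else i - j) (p - (if i \<le> j then j - i else i - j))"

definition dist_sq_cycle :: "nat \<Rightarrow> real mat" where
  "dist_sq_cycle p = mat p p (\<lambda>(i,j). real ((cycle_dist p i j)^2))"

definition ones_mat :: "nat \<Rightarrow> real mat" where
  "ones_mat p = mat p p (\<lambda>_. 1)"

definition B_mat :: "nat \<Rightarrow> real \<Rightarrow> real mat" where
  "B_mat m l = mat (2*m) (2*m) (\<lambda>(i,j).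
     if cycle_dist (2*m) i j = m then 2*l
     else if cycle_dist (2*m) i j = m - 1 then - l else 0)"

end

theory Submission imports Defs begin

definition dd :: "int \<Rightarrow> int \<Rightarrow> int" where "dd p x = min (x mod p) (p - x mod p)"

lemma cd_dd: assumes "i < p" "j < p" shows "int (cycle_dist p i j) = dd (int p) (int i - int j)"
proof (cases "i \<le> j")
  case True
  show ?thesis
  proof (cases "i = j")
    case True then show ?thesis by (simp add: cycle_dist_def dd_def)
  next
    case False
    have "(int i - int j) mod int p = int p - (int j - int i)"
      proof -
      have "(int i - int j) mod int p = (int i - int j + int p) mod int p" by simp
      also have "\<dots> = int i - int j + int p" using assms False True by (intro mod_pos_pos_trivial) auto
      finally show ?thesis by simp
    qed
    then show ?thesis using True assms by (simp add: cycle_dist_def dd_def of_nat_diff min.commute)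
  qed
next
  case False
  have "(int i - int j) mod int p = int i - int j" using assms False by simp
  then show ?thesis using False assms by (simp add: cycle_dist_def dd_def of_nat_diff)
qed

lemma cd_sym: "cycle_dist p i j = cycle_dist p j i"
  by (auto simp: cycle_dist_def)

lemma dd_mod[simp]: "dd p (x mod p) = dd p x" by (simp add: dd_def)

lemma dd_small: assumes "p = 2*m" "m > 0" "\<bar>y\<bar> \<le> m" shows "dd p y = \<bar>y\<bar>"
proof (cases "y \<ge> 0")
  case True
  then have "y mod p = y" using assms by simp
  then show ?thesis using assms True by (simp add: dd_def)
next
  case False
  then have "y mod p = y + p" using assms
    proof -
    have "y mod p = (y + p) mod p" by simp
    also have "\<dots> = y + p" using assms False by (intro mod_pos_pos_trivial) auto
    finally show ?thesis .
  qed
  then show ?thesis using assms False by (simp add: dd_def)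
qed

lemma second_diff: assumes "p = 2*m" "m \<ge> 2" "0 \<le> c" "c < p"
  shows "2 * dd p (c - m)^2 - dd p (c - m + 1)^2 - dd p (c - m - 1)^2 = (if c = 0 then 4*m - 2 else -2)"
proof (cases "c = 0")
  case True
  have "(-m-1) mod p = m - 1" using assms
    proof -
    have "(-m-1) mod p = (-m-1 + p) mod p" by simp
    also have "\<dots> = m - 1" using assms by (subst mod_pos_pos_trivial) auto
    finally show ?thesis .
  qed
  moreover have "dd p (m - 1) = m - 1" using dd_small[of p m "m-1"] assms by simp
  ultimately have "dd p (- m - 1) = m - 1"
    by (metis dd_mod)
  moreover have "dd p (- m) = m" using dd_small[of p m "-m"] assms by simp
  moreover have "dd p (- m + 1) = m - 1" using dd_small[of p m "-m+1"] assms by simp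
  ultimately have "2 * dd p (c - m)^2 - dd p (c - m + 1)^2 - dd p (c - m - 1)^2 = 2 * m^2 - (m-1)^2 - (m-1)^2"
    using True by simp
  also have "\<dots> = 4*m - 2" by (simp add: power2_eq_square algebra_simps)
  finally show ?thesis using True by simp
next
  case False
  then show ?thesis using assms dd_small[of p m "c-m"] dd_small[of p m "c-m+1"] dd_small[of p m "c-m-1"]
    by (simp add: power2_eq_square algebra_simps)
qed

lemma dd_cong: "x mod p = y mod p \<Longrightarrow> dd p x = dd p y"
  by (metis dd_mod)

lemma dd_shift: "dd p (x + y) = dd p (x mod p + y)"
  by (rule dd_cong) (simp add: mod_add_left_eq)

lemma dd_neg: "dd p (- x) = dd p x"
  by (simp add: dd_def zmod_zminus1_eq_if min.commute)

lemma second_diff2: assumes "p = 2*m" "m \<ge> 2"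
  shows "2 * dd p (c - m)^2 - dd p (c - m + 1)^2 - dd p (c - m - 1)^2 = (if c mod p = 0 then 4*m - 2 else -2)"
proof -
  have p: "p > 0" using assms by simp
  have "dd p (c - m) = dd p (c mod p - m)" using dd_shift[of p c "- m"] by simp
  moreover have "dd p (c - m + 1) = dd p (c mod p - m + 1)" using dd_shift[of p c "1 - m"] by (simp add: algebra_simps)
  moreover have "dd p (c - m - 1) = dd p (c mod p - m - 1)" using dd_shift[of p c "- m - 1"] by (simp add: algebra_simps)
  ultimately show ?thesis using second_diff[OF assms, of "c mod p"] p by simp
qed

lemma reindex: assumes "j < p"
  shows "(\<Sum>k\<in>{0..<p}. h ((int k - int j) mod int p)) = (\<Sum>r\<in>{0..<p}. h (int r))"
proof (rule sum.reindex_bij_witness[where i="\<lambda>r. (r + j) mod p" and j="\<lambda>k. nat ((int k - int j) mod int p)"])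
  fix a assume a: "a \<in> {0..<p}"
  have "int (nat ((int a - int j) mod int p)) = (int a - int j) mod int p" using assms by simp
  then have "int ((nat ((int a - int j) mod int p) + j) mod p) = ((int a - int j) mod int p + int j) mod int p"
    by (simp add: zmod_int)
  also have "\<dots> = int a mod int p" by (simp add: mod_simps)
  also have "\<dots> = int a" using a by simp
  finally show "(nat ((int a - int j) mod int p) + j) mod p = a" by simp
  show "nat ((int a - int j) mod int p) \<in> {0..<p}" using assms by (simp add: nat_less_iff)
  show "h (int (nat ((int a - int j) mod int p))) = h ((int a - int j) mod int p)" using assms by simp
next
  fix b assume b: "b \<in> {0..<p}"
  have "(int ((b + j) mod p) - int j) mod int p = (int b + int j - int j) mod int p"
    by (simp add: zmod_int mod_simps)
  also have "\<dots> = int b" using b by simp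
  finally show "nat ((int ((b + j) mod p) - int j) mod int p) = b" by simp
  show "(b + j) mod p \<in> {0..<p}" using assms by simp
qed

definition bb :: "nat \<Rightarrow> int \<Rightarrow> real" where
  "bb m r = (if r = int m then 2 else if r = int m - 1 \<or> r = int m + 1 then -1 else 0)"

definition SS :: "nat \<Rightarrow> real" where
  "SS p = (\<Sum>r\<in>{0..<p}. of_int (dd (int p) (int r) ^ 2))"

lemma D_entry: assumes "i < p" "k < p"
  shows "dist_sq_cycle p $$ (i,k) = of_int (dd (int p) ((int k - int i) mod int p) ^ 2)"
proof -
  have "int (cycle_dist p i k) = dd (int p) (int k - int i)"
    using cd_dd[OF assms] dd_neg[of p "int k - int i"] by simp
  then have "real (cycle_dist p i k ^ 2) = of_int (dd (int p) (int k - int i) ^ 2)"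
    by (metis of_int_of_nat_eq of_int_power of_nat_power)
  then show ?thesis using assms by (simp add: dist_sq_cycle_def)
qed

lemma rowsum: assumes "i < p" shows "(\<Sum>k\<in>{0..<p}. dist_sq_cycle p $$ (i,k)) = SS p"
proof -
  have "(\<Sum>k\<in>{0..<p}. dist_sq_cycle p $$ (i,k)) = (\<Sum>k\<in>{0..<p}. (\<lambda>r. of_int (dd (int p) r ^ 2)) ((int k - int i) mod int p))"
    using assms by (intro sum.cong) (auto simp: D_entry)
  also have "\<dots> = SS p" unfolding SS_def by (rule reindex[OF assms])
  finally show ?thesis .
qed

lemma B_entry: assumes "m \<ge> 2" "k < 2*m" "j < 2*m"
  shows "B_mat m l $$ (k,j) = l * bb m ((int k - int j) mod int (2*m))"
proof -
  define r where "r = (int k - int j) mod int (2*m)"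
  have r: "0 \<le> r" "r < 2 * int m" using assms by (auto simp: r_def)
  have "int (cycle_dist (2*m) k j) = dd (int (2*m)) r" using cd_dd[OF assms(2,3)] r_def by simp
  also have "\<dots> = min r (2 * int m - r)" using r by (simp add: dd_def)
  finally have c: "int (cycle_dist (2*m) k j) = min r (2 * int m - r)" .
  have e1: "cycle_dist (2*m) k j = m \<longleftrightarrow> r = int m" using c r by linarith
  have e2: "cycle_dist (2*m) k j = m - 1 \<longleftrightarrow> r = int m - 1 \<or> r = int m + 1" using c r assms(1) by linarith
  have e3: "cycle_dist (2*m) k j = m - Suc 0 \<longleftrightarrow> r = int m - 1 \<or> r = int m + 1" using e2 by simp
  have Bk: "B_mat m l $$ (k,j) = (if cycle_dist (2*m) k j = m then 2*l else if cycle_dist (2*m) k j = m - 1 then -l else 0)"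
    using assms by (simp add: B_mat_def)
  have "B_mat m l $$ (k,j) = l * bb m r"
  proof (cases "r = int m")
    case True then show ?thesis using Bk e1 by (simp add: bb_def)
  next
    case False
    show ?thesis
    proof (cases "r = int m - 1 \<or> r = int m + 1")
      case True then show ?thesis using Bk e1 e2 False assms by (auto simp: bb_def)
    next
      case F2: False then show ?thesis using Bk e1 e2 False by (simp add: bb_def)
    qed
  qed
  then show ?thesis unfolding r_def .
qed

lemma DB: assumes "m \<ge> 2" "i < 2*m" "j < 2*m"
  shows "(\<Sum>k\<in>{0..<2*m}. dist_sq_cycle (2*m) $$ (i,k) * B_mat m l $$ (k,j)) = l * (if i = j then 4 * real m - 2 else -2)"
proof -
  define p where "p = 2*m"
  define G where "G r = of_int (dd (int p) (r + (int j - int i)) ^ 2) * (l * bb m r)" for r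
  have "(\<Sum>k\<in>{0..<p}. dist_sq_cycle p $$ (i,k) * B_mat m l $$ (k,j)) = (\<Sum>k\<in>{0..<p}. G ((int k - int j) mod int p))"
  proof (intro sum.cong refl)
    fix k assume k: "k \<in> {0..<p}"
    have "dd (int p) ((int k - int i) mod int p) = dd (int p) ((int k - int j) + (int j - int i))" by simp
    also have "\<dots> = dd (int p) ((int k - int j) mod int p + (int j - int i))" by (rule dd_shift)
    finally show "dist_sq_cycle p $$ (i,k) * B_mat m l $$ (k,j) = G ((int k - int j) mod int p)"
      using k assms unfolding G_def p_def by (simp add: D_entry B_entry)
  qed
  also have "\<dots> = (\<Sum>r\<in>{0..<p}. G (int r))" by (rule reindex) (use assms p_def in auto)
  also have "\<dots> = (\<Sum>r\<in>{m-1, m, m+1}. G (int r))"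
    by (rule sum.mono_neutral_right) (use assms p_def in \<open>auto simp: G_def bb_def\<close>)
  also have "\<dots> = G (int m - 1) + G (int m) + G (int m + 1)"
  proof -
    have d: "m - 1 \<notin> {m, m+1}" "m \<notin> {m+1}" using assms by auto
    have "(\<Sum>r\<in>{m-1, m, m+1}. G (int r)) = G (int (m-1)) + (G (int m) + G (int (m+1)))"
      using d by auto
    moreover have "int (m-1) = int m - 1" using assms by simp
    ultimately show ?thesis by (simp only: of_nat_add of_nat_1 add.assoc)
  qed
  also have "\<dots> = l * of_int (2 * dd p (int i - int j - m)^2 - dd p (int i - int j - m + 1)^2 - dd p (int i - int j - m - 1)^2)"
  proof -
    have a: "dd p (int m - 1 + (int j - int i)) = dd p (int i - int j - m + 1)"
      using dd_neg[of p "int i - int j - m + 1"] by (simp add: algebra_simps)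
    have b: "dd p (int m + (int j - int i)) = dd p (int i - int j - m)"
      using dd_neg[of p "int i - int j - m"] by (simp add: algebra_simps)
    have c: "dd p (int m + 1 + (int j - int i)) = dd p (int i - int j - m - 1)"
      using dd_neg[of p "int i - int j - m - 1"] by (simp add: algebra_simps)
    have bbv: "bb m (int m - 1) = -1" "bb m (int m) = 2" "bb m (int m + 1) = -1" by (simp_all add: bb_def)
    define A where "A = dd p (int i - int j - m + 1)"
    define B where "B = dd p (int i - int j - m)"
    define C where "C = dd p (int i - int j - m - 1)"
    have "G (int m - 1) + G (int m) + G (int m + 1) = of_int (A^2) * (l * -1) + of_int (B^2) * (l * 2) + of_int (C^2) * (l * -1)"
      unfolding G_def a b c bbv A_def B_def C_def by simp
    also have "\<dots> = l * of_int (2 * B^2 - A^2 - C^2)" by (simp add: algebra_simps)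
    finally show ?thesis unfolding A_def B_def C_def .
  qed
  also have "\<dots> = l * (if i = j then 4 * real m - 2 else -2)"
  proof -
    have "(int i - int j) mod int p = 0 \<longleftrightarrow> i = j"
    proof
      assume "(int i - int j) mod int p = 0"
      then have "int p dvd (int i - int j)" by auto
      then obtain t where t: "int i - int j = int p * t" by auto
      have t1: "int p * t \<ge> int p" if "t \<ge> 1" using mult_left_mono[of 1 t "int p"] that by simp
      have t2: "int p * t \<le> - int p" if "t \<le> -1" using mult_left_mono[of t "-1" "int p"] that by simp
      have "t = 0" using t assms p_def t1 t2 by linarith
      then show "i = j" using t by simp
    qed simp
    moreover have "2 * dd p (int i - int j - m)^2 - dd p (int i - int j - m + 1)^2 - dd p (int i - int j - m - 1)^2
       = (if (int i - int j) mod int p = 0 then 4*int m - 2 else -2)"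
      by (rule second_diff2) (use assms p_def in auto)
    ultimately show ?thesis by simp
  qed
  finally show ?thesis unfolding p_def .
qed

lemma D_sym: "i < p \<Longrightarrow> k < p \<Longrightarrow> dist_sq_cycle p $$ (i,k) = dist_sq_cycle p $$ (k,i)"
  by (simp add: dist_sq_cycle_def cd_sym)

lemma B_sym: "i < 2*m \<Longrightarrow> k < 2*m \<Longrightarrow> B_mat m l $$ (i,k) = B_mat m l $$ (k,i)"
  by (simp add: B_mat_def cd_sym)

lemma SS_pos: assumes "p \<ge> 2" shows "SS p \<ge> 1"
proof -
  have "dd (int p) 1 = 1" using assms by (simp add: dd_def)
  then have "of_int (dd (int p) (int 1) ^ 2) \<le> SS p" unfolding SS_def
    by (intro member_le_sum[of 1 "{0..<p}" "\<lambda>r. of_int (dd (int p) (int r) ^ 2)"]) (use assms in auto)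
  then show ?thesis using \<open>dd (int p) 1 = 1\<close> by simp
qed

lemma eig_eq: assumes "p \<ge> 2"
    and "eigenvalue (dist_sq_cycle p) l"
    and "\<forall>\<mu>. eigenvalue (dist_sq_cycle p) \<mu> \<longrightarrow> \<mu> \<le> l"
  shows "l = SS p"
proof -
  let ?D = "dist_sq_cycle p"
  have dimD: "dim_row ?D = p" "dim_col ?D = p" by (simp_all add: dist_sq_cycle_def)
  have "eigenvalue ?D (SS p)"
    unfolding eigenvalue_def eigenvector_def
  proof (intro exI conjI)
    let ?v = "vec p (\<lambda>_. 1::real)"
    show "?v \<in> carrier_vec (dim_row ?D)" using dimD by simp
    show "?v \<noteq> 0\<^sub>v (dim_row ?D)" using dimD assms(1)
      by (metis index_vec index_zero_vec(1) less_le_trans pos2 zero_neq_one)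
    show "?D *\<^sub>v ?v = SS p \<cdot>\<^sub>v ?v"
    proof (rule eq_vecI)
      fix i assume "i < dim_vec (SS p \<cdot>\<^sub>v ?v)"
      then have i: "i < p" by simp
      have "(?D *\<^sub>v ?v) $ i = (\<Sum>k\<in>{0..<p}. ?D $$ (i,k))"
        using i dimD by (simp add: scalar_prod_def)
      then show "(?D *\<^sub>v ?v) $ i = (SS p \<cdot>\<^sub>v ?v) $ i" using i rowsum[OF i] by simp
    qed (use dimD in simp)
  qed
  then have le1: "SS p \<le> l" using assms(3) by blast
  from assms(2) obtain v where ev: "eigenvector ?D v l" unfolding eigenvalue_def by blast
  then have v: "v \<in> carrier_vec p" "v \<noteq> 0\<^sub>v p" "?D *\<^sub>v v = l \<cdot>\<^sub>v v"
    unfolding eigenvector_def using dimD by auto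
  define M where "M = Max ((\<lambda>i. \<bar>v $ i\<bar>) ` {0..<p})"
  have fin: "finite ((\<lambda>i. \<bar>v $ i\<bar>) ` {0..<p})" "(\<lambda>i. \<bar>v $ i\<bar>) ` {0..<p} \<noteq> {}" using assms(1) by auto
  obtain i0 where i0: "i0 < p" "\<bar>v $ i0\<bar> = M" using Max_in[OF fin] unfolding M_def by auto
  have Mge: "\<bar>v $ k\<bar> \<le> M" if "k < p" for k using Max_ge[OF fin(1)] that unfolding M_def by auto
  have "M > 0"
  proof (rule ccontr)
    assume "\<not> M > 0"
    then have "\<forall>k<p. v $ k = 0" using Mge by (metis abs_ge_zero abs_le_zero_iff order_trans not_less)
    then have "v = 0\<^sub>v p" using v(1) by (intro eq_vecI) auto
    then show False using v(2) by simp
  qed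
  have "l * v $ i0 = (?D *\<^sub>v v) $ i0" using v(3) i0 v(1) by simp
  also have "\<dots> = (\<Sum>k\<in>{0..<p}. ?D $$ (i0,k) * v $ k)"
    using i0 dimD v(1) by (simp add: scalar_prod_def)
  finally have eq: "l * v $ i0 = (\<Sum>k\<in>{0..<p}. ?D $$ (i0,k) * v $ k)" .
  have Dnn: "?D $$ (i0,k) \<ge> 0" if "k < p" for k using i0 that by (simp add: dist_sq_cycle_def)
  have "\<bar>l\<bar> * M = \<bar>\<Sum>k\<in>{0..<p}. ?D $$ (i0,k) * v $ k\<bar>" by (metis abs_mult eq i0(2))
  also have "\<dots> \<le> (\<Sum>k\<in>{0..<p}. \<bar>?D $$ (i0,k) * v $ k\<bar>)" by (rule sum_abs)
  also have "\<dots> \<le> (\<Sum>k\<in>{0..<p}. ?D $$ (i0,k) * M)"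
    by (intro sum_mono) (use Dnn Mge in \<open>auto simp: abs_mult intro: mult_left_mono\<close>)
  also have "\<dots> = SS p * M" using rowsum[OF i0(1)] by (metis sum_distrib_right)
  finally have "\<bar>l\<bar> \<le> SS p" using \<open>M > 0\<close> by simp
  then show ?thesis using le1 by simp
qed

lemma DX: assumes "m \<ge> 2" "l = SS (2*m)" "i < 2*m" "j < 2*m"
  shows "(\<Sum>k\<in>{0..<2*m}. dist_sq_cycle (2*m) $$ (i,k) *
     ((1 / (4 * l * real m)) \<cdot>\<^sub>m (2 \<cdot>\<^sub>m ones_mat (2*m) + B_mat m l)) $$ (k,j)) = (if i = j then 1 else 0)"
proof -
  let ?D = "dist_sq_cycle (2*m)" and ?c = "1 / (4 * l * real m)"
  have lpos: "l \<ge> 1" using SS_pos[of "2*m"] assms by simp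
  have "(\<Sum>k\<in>{0..<2*m}. ?D $$ (i,k) * ((?c) \<cdot>\<^sub>m (2 \<cdot>\<^sub>m ones_mat (2*m) + B_mat m l)) $$ (k,j))
     = (\<Sum>k\<in>{0..<2*m}. ?c * (2 * ?D $$ (i,k)) + ?c * (?D $$ (i,k) * B_mat m l $$ (k,j)))"
    using assms by (intro sum.cong refl) (auto simp: ones_mat_def B_mat_def algebra_simps)
  also have "\<dots> = ?c * (2 * (\<Sum>k\<in>{0..<2*m}. ?D $$ (i,k))) + ?c * (\<Sum>k\<in>{0..<2*m}. ?D $$ (i,k) * B_mat m l $$ (k,j))"
    by (simp add: sum.distrib sum_distrib_left)
  also have "\<dots> = ?c * (2 * l) + ?c * (l * (if i = j then 4 * real m - 2 else -2))"
    using rowsum[OF assms(3)] DB[OF assms(1,3,4)] assms(2) by simp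
  also have "\<dots> = (if i = j then 1 else 0)" using lpos assms(1) by (auto simp: field_simps)
  finally show ?thesis .
qed

theorem lemma6p1:
  fixes m :: nat and l :: real
  assumes "m \<ge> 2"
    and "eigenvalue (dist_sq_cycle (2*m)) l"
    and "\<forall>\<mu>. eigenvalue (dist_sq_cycle (2*m)) \<mu> \<longrightarrow> \<mu> \<le> l"
  shows "invertible_mat (dist_sq_cycle (2*m)) \<and>
    (let X = (1 / (4 * l * real m)) \<cdot>\<^sub>m (2 \<cdot>\<^sub>m ones_mat (2*m) + B_mat m l)
     in dist_sq_cycle (2*m) * X = 1\<^sub>m (2*m) \<and> X * dist_sq_cycle (2*m) = 1\<^sub>m (2*m))"
proof -
  let ?D = "dist_sq_cycle (2*m)"
  define X where "X = (1 / (4 * l * real m)) \<cdot>\<^sub>m (2 \<cdot>\<^sub>m ones_mat (2*m) + B_mat m l)"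
  have l: "l = SS (2*m)" using eig_eq[of "2*m" l] assms by simp
  have dimD: "dim_row ?D = 2*m" "dim_col ?D = 2*m" by (simp_all add: dist_sq_cycle_def)
  have dimX: "dim_row X = 2*m" "dim_col X = 2*m" by (simp_all add: X_def ones_mat_def B_mat_def)
  have Xsym: "X $$ (i,k) = X $$ (k,i)" if "i < 2*m" "k < 2*m" for i k
    using that B_sym[of i m k l] by (simp add: X_def ones_mat_def B_mat_def)
  have DXe: "(\<Sum>k\<in>{0..<2*m}. ?D $$ (i,k) * X $$ (k,j)) = (if i = j then 1 else 0)"
    if "i < 2*m" "j < 2*m" for i j
    using DX[OF assms(1) l that] unfolding X_def .
  have 1: "?D * X = 1\<^sub>m (2*m)"
  proof (rule eq_matI)
    fix i j assume ij: "i < dim_row (1\<^sub>m (2*m))" "j < dim_col (1\<^sub>m (2*m))"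
    then show "(?D * X) $$ (i,j) = 1\<^sub>m (2*m) $$ (i,j)"
      using DXe[of i j] dimD dimX by (simp add: scalar_prod_def)
  qed (use dimD dimX in auto)
  have 2: "X * ?D = 1\<^sub>m (2*m)"
  proof (rule eq_matI)
    fix i j assume ij: "i < dim_row (1\<^sub>m (2*m))" "j < dim_col (1\<^sub>m (2*m))"
    then have "(X * ?D) $$ (i,j) = (\<Sum>k\<in>{0..<2*m}. X $$ (i,k) * ?D $$ (k,j))"
      using dimD dimX by (simp add: scalar_prod_def)
    also have "\<dots> = (\<Sum>k\<in>{0..<2*m}. ?D $$ (j,k) * X $$ (k,i))"
      using ij by (intro sum.cong refl) (auto simp: Xsym[of i] D_sym[of _ "2*m" j])
    also have "\<dots> = 1\<^sub>m (2*m) $$ (i,j)" using DXe[of j i] ij by auto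
    finally show "(X * ?D) $$ (i,j) = 1\<^sub>m (2*m) $$ (i,j)" .
  qed (use dimD dimX in auto)
  have "invertible_mat ?D"
    unfolding invertible_mat_def inverts_mat_def square_mat.simps using 1 2 dimD dimX by auto
  then show ?thesis using 1 2 unfolding X_def Let_def by simp
qed
end
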